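(* Let $1\le k\le n$ be integers, let $M\in\mathbb{R}^{2n\times 2n}$ be symmetric positive definite, let $N=\operatorname{diag}(\nu_1,\ldots,\nu_k)$ with $0<\nu_1<\cdots<\nu_k$, and let $\tilde N=\operatorname{diag}(N,N)$. Consider the problem of minimizing $f(X)=\operatorname{tr}(\tilde N X^TMX)$ over $X\in\mathbb{R}^{2n\times 2k}$ subject to $X^TJ_{2n}X=J_{2k}$. Let $X_*$ be a critical point of this problem whose columns are associated with the symplectic eigenvalues $[d_{i_1},\ldots,d_{i_k}]$ of $M$, i.e., $X_*^TMX_*=\operatorname{diag}(D_{\mathcal I_k},D_{\mathcal I_k})$ with $D_{\mathcal I_k}=\operatorname{diag}(d_{i_1},\ldots,d_{i_k})$, and suppose these are not in nonincreasing order, i.e., there exist $1\le\alpha<\beta\le k$ with $d_{i_\alpha}<d_{i_\beta}$. Then $X_*$ is not a (local) minimizer of the problem, and therefore it is a saddle point.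
   Context: $J_{2m}=\begin{bmatrix}0 & I_m\\ -I_m & 0\end{bmatrix}$. The symplectic eigenvalues of $M$ are the positive numbers $d_1,\ldots,d_n$ such that $S^TMS=\operatorname{diag}(D,D)$, $D=\operatorname{diag}(d_1,\ldots,d_n)$, for some $S\in\mathbb{R}^{2n\times2n}$ with $S^TJ_{2n}S=J_{2n}$ (Williamson's theorem). A point $X_*$ is a critical point of the problem if $X_*^TJ_{2n}X_*=J_{2k}$ and there exists a skew-symmetric $L_*\in\mathbb{R}^{2k\times 2k}$ with $MX_*\tilde N=J_{2n}X_*L_*$. A saddle point is a critical point that is neither a local minimizer nor a local maximizer of $f$ on the feasible set $\{X: X^TJ_{2n}X=J_{2k}\}$. *)

theory Defs
  imports "Jordan_Normal_Form.Matrix"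
begin

definition Jsym :: "nat \<Rightarrow> real mat" where
  "Jsym m = four_block_mat (0\<^sub>m m m) (1\<^sub>m m) (- 1\<^sub>m m) (0\<^sub>m m m)"

definition diag2 :: "nat \<Rightarrow> (nat \<Rightarrow> real) \<Rightarrow> real mat" where
  "diag2 m d = four_block_mat (mat_diag m d) (0\<^sub>m m m) (0\<^sub>m m m) (mat_diag m d)"

definition mtrace :: "real mat \<Rightarrow> real" where
  "mtrace A = (\<Sum>i<dim_row A. A $$ (i,i))"

definition mat_dist :: "real mat \<Rightarrow> real mat \<Rightarrow> real" where
  "mat_dist A B = sqrt (\<Sum>i<dim_row A. \<Sum>j<dim_col A. (A $$ (i,j) - B $$ (i,j))\<^sup>2)"

definition sym_pos_def :: "nat \<Rightarrow> real mat \<Rightarrow> bool" where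
  "sym_pos_def m M \<longleftrightarrow> M \<in> carrier_mat m m \<and> transpose_mat M = M \<and>
     (\<forall>x \<in> carrier_vec m. x \<noteq> 0\<^sub>v m \<longrightarrow> x \<bullet> (M *\<^sub>v x) > 0)"

definition symplectic :: "nat \<Rightarrow> real mat \<Rightarrow> bool" where
  "symplectic m S \<longleftrightarrow> S \<in> carrier_mat (2*m) (2*m) \<and> transpose_mat S * Jsym m * S = Jsym m"

text \<open>d 0, ..., d (n-1) are the symplectic eigenvalues of M (Williamson's theorem)\<close>
definition symp_eigenvalues :: "nat \<Rightarrow> real mat \<Rightarrow> (nat \<Rightarrow> real) \<Rightarrow> bool" where
  "symp_eigenvalues n M d \<longleftrightarrow> (\<forall>i<n. d i > 0) \<and>
     (\<exists>S. symplectic n S \<and> transpose_mat S * M * S = diag2 n d)"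

definition feasible :: "nat \<Rightarrow> nat \<Rightarrow> real mat \<Rightarrow> bool" where
  "feasible n k X \<longleftrightarrow> X \<in> carrier_mat (2*n) (2*k) \<and> transpose_mat X * Jsym n * X = Jsym k"

definition fobj :: "nat \<Rightarrow> (nat \<Rightarrow> real) \<Rightarrow> real mat \<Rightarrow> real mat \<Rightarrow> real" where
  "fobj k nu M X = mtrace (diag2 k nu * transpose_mat X * M * X)"

definition local_min :: "nat \<Rightarrow> nat \<Rightarrow> (nat \<Rightarrow> real) \<Rightarrow> real mat \<Rightarrow> real mat \<Rightarrow> bool" where
  "local_min n k nu M X \<longleftrightarrow> feasible n k X \<and>
     (\<exists>e>0. \<forall>Y. feasible n k Y \<and> mat_dist Y X < e \<longrightarrow> fobj k nu M X \<le> fobj k nu M Y)"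

definition local_max :: "nat \<Rightarrow> nat \<Rightarrow> (nat \<Rightarrow> real) \<Rightarrow> real mat \<Rightarrow> real mat \<Rightarrow> bool" where
  "local_max n k nu M X \<longleftrightarrow> feasible n k X \<and>
     (\<exists>e>0. \<forall>Y. feasible n k Y \<and> mat_dist Y X < e \<longrightarrow> fobj k nu M Y \<le> fobj k nu M X)"

definition critical_point :: "nat \<Rightarrow> nat \<Rightarrow> (nat \<Rightarrow> real) \<Rightarrow> real mat \<Rightarrow> real mat \<Rightarrow> bool" where
  "critical_point n k nu M X \<longleftrightarrow> feasible n k X \<and>
     (\<exists>L. L \<in> carrier_mat (2*k) (2*k) \<and> transpose_mat L = - L \<and>
          M * X * diag2 k nu = Jsym n * X * L)"

definition saddle_point :: "nat \<Rightarrow> nat \<Rightarrow> (nat \<Rightarrow> real) \<Rightarrow> real mat \<Rightarrow> real mat \<Rightarrow> bool" where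
  "saddle_point n k nu M X \<longleftrightarrow> critical_point n k nu M X \<and>
     \<not> local_min n k nu M X \<and> \<not> local_max n k nu M X"

end

theory Submission
  imports Defs
begin

lemma sum_split2: "sum f {..<k+k} = sum f {..<k} + (\<Sum>i<k. f (i+k)) " for f :: "nat \<Rightarrow> real"
proof -
  have "sum f {..<k+k} = sum f {0..<k} + sum f {0+k..<k+k}"
    by (simp add: lessThan_atLeast0 sum.atLeastLessThan_concat)
  also have "sum f {0+k..<k+k} = (\<Sum>i=0..<k. f (i+k))" by (rule sum.shift_bounds_nat_ivl)
  finally show ?thesis by (simp add: lessThan_atLeast0)
qed

lemma uminus_zero_mat_r[simp]: "- 0\<^sub>m n m = (0\<^sub>m n m :: real mat)"
  by (rule eq_matI) auto

lemma Jsym_carrier: "Jsym m \<in> carrier_mat (2*m) (2*m)"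
  unfolding Jsym_def mult_2 by (rule four_block_carrier_mat) auto

definition blk :: "nat \<Rightarrow> real mat \<Rightarrow> real mat \<Rightarrow> real mat" where
  "blk k A B = four_block_mat A (0\<^sub>m k k) (0\<^sub>m k k) B"

lemma blk_carrier: "A \<in> carrier_mat k k \<Longrightarrow> B \<in> carrier_mat k k \<Longrightarrow> blk k A B \<in> carrier_mat (2*k) (2*k)"
  unfolding blk_def mult_2 by (rule four_block_carrier_mat) auto

lemma sympl_blk:
  assumes A: "A \<in> carrier_mat k k" and B: "B \<in> carrier_mat k k"
    and AB: "transpose_mat A * B = 1\<^sub>m k" and BA: "transpose_mat B * A = 1\<^sub>m k"
  shows "transpose_mat (blk k A B) * Jsym k * blk k A B = Jsym k"
proof -
  have At: "transpose_mat A \<in> carrier_mat k k" and Bt: "transpose_mat B \<in> carrier_mat k k" using A B by auto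
  have c0: "0\<^sub>m k k \<in> carrier_mat k k" and c1: "1\<^sub>m k \<in> carrier_mat k k" and cm: "- 1\<^sub>m k \<in> carrier_mat k k" by auto
  have T: "transpose_mat (blk k A B) = four_block_mat (transpose_mat A) (0\<^sub>m k k) (0\<^sub>m k k) (transpose_mat B)"
    unfolding blk_def using A B by (subst transpose_four_block_mat) auto
  have 1: "four_block_mat (transpose_mat A) (0\<^sub>m k k) (0\<^sub>m k k) (transpose_mat B) * Jsym k
     = four_block_mat (0\<^sub>m k k) (transpose_mat A) (- transpose_mat B) (0\<^sub>m k k)"
    unfolding Jsym_def
    apply (subst mult_four_block_mat[OF At c0 c0 Bt c0 c1 cm c0])
    using At Bt by simp_all
  have 2: "four_block_mat (0\<^sub>m k k) (transpose_mat A) (- transpose_mat B) (0\<^sub>m k k) * blk k A B = Jsym k"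
    unfolding Jsym_def blk_def
    apply (subst mult_four_block_mat[OF c0 At _ c0 A c0 c0 B])
    using At Bt A B AB BA by simp_all
  show ?thesis by (simp only: T 1 2)
qed

lemma feasible_mult:
  assumes F: "feasible n k X" and R: "R \<in> carrier_mat (2*k) (2*k)"
    and S: "transpose_mat R * Jsym k * R = Jsym k"
  shows "feasible n k (X * R)"
proof -
  have X: "X \<in> carrier_mat (2*n) (2*k)" and XJX: "transpose_mat X * Jsym n * X = Jsym k"
    using F unfolding feasible_def by auto
  have Xt: "transpose_mat X \<in> carrier_mat (2*k) (2*n)" and Rt: "transpose_mat R \<in> carrier_mat (2*k) (2*k)"
    using X R by auto
  have J: "Jsym n \<in> carrier_mat (2*n) (2*n)" and Jk: "Jsym k \<in> carrier_mat (2*k) (2*k)" by (rule Jsym_carrier)+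
  have "transpose_mat (X*R) * Jsym n * (X*R) = transpose_mat R * transpose_mat X * Jsym n * (X*R)"
    using X R by (simp add: transpose_mult)
  also have "\<dots> = transpose_mat R * (transpose_mat X * Jsym n * X) * R"
  proof -
    have XtJ: "transpose_mat X * Jsym n \<in> carrier_mat (2*k) (2*n)" using Xt J by simp
    have XR: "X * R \<in> carrier_mat (2*n) (2*k)" using X R by simp
    have XtJX: "transpose_mat X * Jsym n * X \<in> carrier_mat (2*k) (2*k)" using XtJ X by simp
    have e1: "transpose_mat R * transpose_mat X * Jsym n = transpose_mat R * (transpose_mat X * Jsym n)"
      by (rule assoc_mult_mat[OF Rt Xt J])
    have e2: "transpose_mat R * (transpose_mat X * Jsym n) * (X*R) = transpose_mat R * ((transpose_mat X * Jsym n) * (X*R))"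
      by (rule assoc_mult_mat[OF Rt XtJ XR])
    have e3: "(transpose_mat X * Jsym n) * (X*R) = (transpose_mat X * Jsym n * X) * R"
      by (rule assoc_mult_mat[OF XtJ X R, symmetric])
    have e4: "transpose_mat R * ((transpose_mat X * Jsym n * X) * R) = transpose_mat R * (transpose_mat X * Jsym n * X) * R"
      by (rule assoc_mult_mat[OF Rt XtJX R, symmetric])
    show ?thesis unfolding e1 e2 e3 e4 ..
  qed
  also have "\<dots> = Jsym k" using XJX S by simp
  finally show ?thesis using X R unfolding feasible_def by auto
qed

lemma diag2_mat_diag: "diag2 k f = mat_diag (2*k) (\<lambda>i. if i<k then f i else f (i-k))"
  unfolding diag2_def mat_diag_def by (rule eq_matI) auto

lemma trace_formula:
  assumes R: "R \<in> carrier_mat m m"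
  shows "mtrace (mat_diag m f * transpose_mat R * mat_diag m g * R) = (\<Sum>i<m. f i * (\<Sum>l<m. g l * (R$$(l,i))^2))"
proof -
  have Rt: "transpose_mat R \<in> carrier_mat m m" using R by simp
  have F: "mat_diag m f \<in> carrier_mat m m" and G: "mat_diag m g \<in> carrier_mat m m" by simp_all
  have e1: "mat_diag m f * transpose_mat R * mat_diag m g = mat_diag m f * (transpose_mat R * mat_diag m g)"
    by (rule assoc_mult_mat[OF F Rt G])
  have e2: "mat_diag m f * (transpose_mat R * mat_diag m g) * R = mat_diag m f * (transpose_mat R * mat_diag m g * R)"
    by (rule assoc_mult_mat[OF F _ R]) (use Rt G in simp)
  have e3: "transpose_mat R * mat_diag m g * R = transpose_mat R * (mat_diag m g * R)"
    by (rule assoc_mult_mat[OF Rt G R])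
  have Z: "transpose_mat R * (mat_diag m g * R) \<in> carrier_mat m m" by (rule mult_carrier_mat[OF Rt mult_carrier_mat[OF G R]])
  have GR: "mat_diag m g * R = mat m m (\<lambda>(i,j). g i * R $$ (i,j))"
    by (rule mat_diag_mult_left[OF R])
  show ?thesis
    unfolding e1 e2 e3 mtrace_def mat_diag_mult_left[OF Z]
  proof (rule sum.cong)
    show "{..<dim_row (mat m m (\<lambda>(i, j). f i * (transpose_mat R * (mat_diag m g * R)) $$ (i, j)))} = {..<m}" by simp
  next
    fix i assume "i \<in> {..<m}"
    then have i: "i < m" by simp
    show "mat m m (\<lambda>(i, j). f i * (transpose_mat R * (mat_diag m g * R)) $$ (i, j)) $$ (i, i) =
          f i * (\<Sum>l<m. g l * (R $$ (l, i))\<^sup>2)"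
      using i R unfolding GR
      by (auto simp: scalar_prod_def power2_eq_square lessThan_atLeast0 algebra_simps intro!: sum.cong)
  qed
qed

lemma fobj_blk:
  assumes X: "X \<in> carrier_mat (2*n) (2*k)" and M: "M \<in> carrier_mat (2*n) (2*n)"
    and XMX: "transpose_mat X * M * X = diag2 k D"
    and A: "A \<in> carrier_mat k k" and B: "B \<in> carrier_mat k k"
  shows "fobj k nu M (X * blk k A B) = (\<Sum>i<k. nu i * (\<Sum>l<k. D l * (A$$(l,i))^2)) + (\<Sum>i<k. nu i * (\<Sum>l<k. D l * (B$$(l,i))^2))"
proof -
  define R where "R = blk k A B"
  have R: "R \<in> carrier_mat (2*k) (2*k)" unfolding R_def using A B by (rule blk_carrier)
  have Rt: "transpose_mat R \<in> carrier_mat (2*k) (2*k)" using R by simp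
  have Xt: "transpose_mat X \<in> carrier_mat (2*k) (2*n)" using X by simp
  have N: "diag2 k nu \<in> carrier_mat (2*k) (2*k)" unfolding diag2_mat_diag by simp
  have NR: "diag2 k nu * transpose_mat R \<in> carrier_mat (2*k) (2*k)" using N Rt by simp
  have XtM: "transpose_mat X * M \<in> carrier_mat (2*k) (2*n)" using Xt M by simp
  have XR: "X * R \<in> carrier_mat (2*n) (2*k)" using X R by simp
  have XtMX: "transpose_mat X * M * X \<in> carrier_mat (2*k) (2*k)" using XtM X by simp
  have "diag2 k nu * transpose_mat (X*R) * M * (X*R) = diag2 k nu * transpose_mat R * diag2 k D * R"
  proof -
    have e0: "transpose_mat (X*R) = transpose_mat R * transpose_mat X" using X R by (simp add: transpose_mult)
    have e1: "diag2 k nu * (transpose_mat R * transpose_mat X) = diag2 k nu * transpose_mat R * transpose_mat X"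
      by (rule assoc_mult_mat[OF N Rt Xt, symmetric])
    have e2: "diag2 k nu * transpose_mat R * transpose_mat X * M = diag2 k nu * transpose_mat R * (transpose_mat X * M)"
      by (rule assoc_mult_mat[OF NR Xt M])
    have e3: "diag2 k nu * transpose_mat R * (transpose_mat X * M) * (X*R) = diag2 k nu * transpose_mat R * (transpose_mat X * M * (X*R))"
      by (rule assoc_mult_mat[OF NR XtM XR])
    have e4: "transpose_mat X * M * (X*R) = transpose_mat X * M * X * R"
      by (rule assoc_mult_mat[OF XtM X R, symmetric])
    have e5: "diag2 k nu * transpose_mat R * (transpose_mat X * M * X * R) = diag2 k nu * transpose_mat R * (transpose_mat X * M * X) * R"
      by (rule assoc_mult_mat[OF NR XtMX R, symmetric])
    have "diag2 k nu * transpose_mat (X*R) * M * (X*R) = diag2 k nu * transpose_mat R * transpose_mat X * M * (X*R)"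
      unfolding e0 e1 ..
    also have "\<dots> = diag2 k nu * transpose_mat R * (transpose_mat X * M * (X*R))" unfolding e2 e3 ..
    also have "\<dots> = diag2 k nu * transpose_mat R * (transpose_mat X * M * X) * R" unfolding e4 e5 ..
    finally show ?thesis unfolding XMX .
  qed
  then have "fobj k nu M (X * R) = mtrace (diag2 k nu * transpose_mat R * diag2 k D * R)"
    unfolding fobj_def by simp
  also have "\<dots> = (\<Sum>i<2*k. (if i<k then nu i else nu (i-k)) * (\<Sum>l<2*k. (if l<k then D l else D (l-k)) * (R$$(l,i))^2))"
    unfolding diag2_mat_diag by (rule trace_formula[OF R])
  also have "\<dots> = (\<Sum>i<k. nu i * (\<Sum>l<k. D l * (A$$(l,i))^2)) + (\<Sum>i<k. nu i * (\<Sum>l<k. D l * (B$$(l,i))^2))"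
    unfolding mult_2 sum_split2 R_def blk_def using A B by simp
  finally show ?thesis unfolding R_def .
qed

lemma dist_small:
  fixes R :: "real \<Rightarrow> real mat"
  assumes X: "X \<in> carrier_mat p q" and R: "\<And>t. R t \<in> carrier_mat q q" and R0: "R 0 = 1\<^sub>m q"
    and C: "\<And>l j. l<q \<Longrightarrow> j<q \<Longrightarrow> isCont (\<lambda>t. R t $$ (l,j)) 0" and e: "e>0"
  shows "\<exists>\<delta>>0. \<forall>t. t \<noteq> 0 \<and> \<bar>t\<bar> < \<delta> \<longrightarrow> mat_dist (X * R t) X < e"
proof -
  define g where "g t = sqrt (\<Sum>i<p. \<Sum>j<q. ((\<Sum>l<q. X$$(i,l) * R t $$(l,j)) - X$$(i,j))\<^sup>2)" for t :: real
  have eq: "mat_dist (X * R t) X = g t" for t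
    unfolding mat_dist_def g_def using X R[of t]
    by (auto simp: scalar_prod_def lessThan_atLeast0 intro!: sum.cong arg_cong[where f=sqrt])
  have "mat_dist (X * R 0) X = 0" unfolding R0 using X by (simp add: mat_dist_def)
  then have g0: "g 0 = 0" using eq by simp
  have "isCont g 0" unfolding g_def by (intro continuous_intros C) auto
  then have "g \<midarrow>0\<rightarrow> 0" using g0 isCont_def by metis
  from LIM_D[OF this e] obtain s where s: "s>0" "\<forall>x. x \<noteq> 0 \<and> norm (x - 0) < s \<longrightarrow> norm (g x - 0) < e"
    by blast
  show ?thesis
  proof (intro exI[of _ s] conjI allI impI)
    fix t :: real assume "t \<noteq> 0 \<and> \<bar>t\<bar> < s"
    then have "norm (g t - 0) < e" using s by auto
    moreover have "g t \<ge> 0" unfolding g_def by (intro real_sqrt_ge_zero sum_nonneg) auto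
    ultimately show "mat_dist (X * R t) X < e" using eq by simp
  qed (use s in auto)
qed

lemma sum_one:
  assumes "finite S" "a \<in> S" "\<And>x. x \<in> S \<Longrightarrow> x \<noteq> a \<Longrightarrow> f x = 0"
  shows "sum f S = (f a :: real)"
proof -
  have "sum f S = sum f {a}" using assms by (intro sum.mono_neutral_right) auto
  then show ?thesis by simp
qed

lemma sum_two:
  assumes "finite S" "a \<in> S" "b \<in> S" "a \<noteq> b" "\<And>x. x \<in> S \<Longrightarrow> x \<noteq> a \<Longrightarrow> x \<noteq> b \<Longrightarrow> f x = 0"
  shows "sum f S = (f a + f b :: real)"
proof -
  have "sum f S = sum f {a,b}" using assms by (intro sum.mono_neutral_right) auto
  then show ?thesis using assms by simp
qed

definition rot :: "nat \<Rightarrow> nat \<Rightarrow> nat \<Rightarrow> real \<Rightarrow> real mat" where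
  "rot k a b t = mat k k (\<lambda>(i,j). if i = j then (if i = a \<or> i = b then cos t else 1)
     else if i = b \<and> j = a then sin t else if i = a \<and> j = b then - sin t else 0)"

definition scl :: "nat \<Rightarrow> nat \<Rightarrow> real \<Rightarrow> real mat" where
  "scl k a t = mat_diag k (\<lambda>i. if i = a then exp t else 1)"

lemma rot_carrier: "rot k a b t \<in> carrier_mat k k" unfolding rot_def by simp
lemma scl_carrier: "scl k a t \<in> carrier_mat k k" unfolding scl_def by simp

lemma rot0: "rot k a b 0 = 1\<^sub>m k" unfolding rot_def by (rule eq_matI) auto
lemma scl0: "scl k a 0 = 1\<^sub>m k" unfolding scl_def by (rule eq_matI) (auto simp: mat_diag_def)

lemma blk_one: "blk k (1\<^sub>m k) (1\<^sub>m k) = 1\<^sub>m (2*k)"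
  unfolding blk_def mult_2 by simp

lemma rot_orth:
  assumes ab: "a < k" "b < k" "a \<noteq> b"
  shows "transpose_mat (rot k a b t) * rot k a b t = 1\<^sub>m k"
proof (rule eq_matI)
  fix i j assume i: "i < dim_row (1\<^sub>m k)" and j: "j < dim_col (1\<^sub>m k)"
  then have i: "i < k" and j: "j < k" by auto
  let ?Q = "rot k a b t"
  have e: "(transpose_mat ?Q * ?Q) $$ (i,j) = (\<Sum>l<k. ?Q $$ (l,i) * ?Q $$ (l,j))"
    using i j by (simp add: rot_def scalar_prod_def lessThan_atLeast0)
  show "(transpose_mat ?Q * ?Q) $$ (i,j) = 1\<^sub>m k $$ (i,j)"
  proof (cases "i = a \<or> i = b")
    case True
    have "(\<Sum>l<k. ?Q $$ (l,i) * ?Q $$ (l,j)) = ?Q $$ (a,i) * ?Q $$ (a,j) + ?Q $$ (b,i) * ?Q $$ (b,j)"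
      by (rule sum_two) (use ab i j True in \<open>auto simp: rot_def\<close>)
    then show ?thesis unfolding e using ab i j True
      by (auto simp: rot_def power2_eq_square[symmetric])
  next
    case False
    have "(\<Sum>l<k. ?Q $$ (l,i) * ?Q $$ (l,j)) = ?Q $$ (i,i) * ?Q $$ (i,j)"
      by (rule sum_one) (use ab i j False in \<open>auto simp: rot_def\<close>)
    then show ?thesis unfolding e using ab i j False by (auto simp: rot_def)
  qed
qed (auto simp: rot_def)

lemma scl_inv: "transpose_mat (scl k a t) * scl k a (-t) = 1\<^sub>m k"
proof -
  have "transpose_mat (scl k a t) = scl k a t" unfolding scl_def by (rule eq_matI) (auto simp: mat_diag_def)
  moreover have "(\<lambda>i. (if i = a then exp t else 1) * (if i = a then exp (-t) else 1)) = (\<lambda>i. 1::real)"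
    by (auto simp: exp_minus_inverse)
  ultimately show ?thesis unfolding scl_def by simp
qed

lemma scl_inv2: "transpose_mat (scl k a (-t)) * scl k a t = 1\<^sub>m k"
  using scl_inv[of k a "-t"] by simp

lemma inner_rot:
  assumes ab: "a < k" "b < k" "a \<noteq> b" and i: "i < k"
  shows "(\<Sum>l<k. D l * (rot k a b t $$ (l,i))\<^sup>2) = D i + (if i = a then (sin t)\<^sup>2 * (D b - D a) else 0)
     + (if i = b then (sin t)\<^sup>2 * (D a - D b) else 0)"
proof -
  let ?Q = "rot k a b t"
  show ?thesis
  proof (cases "i = a \<or> i = b")
    case True
    have "(\<Sum>l<k. D l * (?Q $$ (l,i))\<^sup>2) = D a * (?Q $$ (a,i))\<^sup>2 + D b * (?Q $$ (b,i))\<^sup>2"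
      by (rule sum_two) (use ab i True in \<open>auto simp: rot_def\<close>)
    then show ?thesis using ab i True
      by (auto simp: rot_def cos_squared_eq algebra_simps)
  next
    case False
    have "(\<Sum>l<k. D l * (?Q $$ (l,i))\<^sup>2) = D i * (?Q $$ (i,i))\<^sup>2"
      by (rule sum_one) (use ab i False in \<open>auto simp: rot_def\<close>)
    then show ?thesis using ab i False by (auto simp: rot_def)
  qed
qed

lemma inner_scl:
  assumes i: "i < k"
  shows "(\<Sum>l<k. D l * (scl k a t $$ (l,i))\<^sup>2) = D i * (if i = a then (exp t)\<^sup>2 else 1)"
proof -
  have "(\<Sum>l<k. D l * (scl k a t $$ (l,i))\<^sup>2) = D i * (scl k a t $$ (i,i))\<^sup>2"
    by (rule sum_one) (use i in \<open>auto simp: scl_def mat_diag_def\<close>)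
  then show ?thesis using i by (auto simp: scl_def mat_diag_def)
qed

lemma cont_if [continuous_intros]:
  "continuous F f \<Longrightarrow> continuous F g \<Longrightarrow> continuous F (\<lambda>t. if P then f t else g t)"
  by (cases P) auto

lemma blk_cont:
  assumes A: "\<And>t. A t \<in> carrier_mat k k" and B: "\<And>t. B t \<in> carrier_mat k k"
    and CA: "\<And>l j. l<k \<Longrightarrow> j<k \<Longrightarrow> isCont (\<lambda>t. A t $$ (l,j)) 0"
    and CB: "\<And>l j. l<k \<Longrightarrow> j<k \<Longrightarrow> isCont (\<lambda>t. B t $$ (l,j)) 0"
    and lj: "l < 2*k" "j < 2*k"
  shows "isCont (\<lambda>t. blk k (A t) (B t) $$ (l,j)) 0"
proof -
  have e: "blk k (A t) (B t) $$ (l,j) = (if l < k then if j < k then A t $$ (l,j) else 0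
      else if j < k then 0 else B t $$ (l-k, j-k))" for t
    unfolding blk_def using A[of t] B[of t] lj by auto
  show ?thesis unfolding e using lj by (cases "l < k"; cases "j < k") (auto intro!: CA CB)
qed

lemma rot_cont: "l<k \<Longrightarrow> j<k \<Longrightarrow> isCont (\<lambda>t. rot k a b t $$ (l,j)) 0"
  unfolding rot_def by (simp, intro continuous_intros)

lemma scl_cont: "l<k \<Longrightarrow> j<k \<Longrightarrow> isCont (\<lambda>t. scl k a t $$ (l,j)) 0"
  unfolding scl_def mat_diag_def by (simp, intro continuous_intros)

lemma scl_cont2: "l<k \<Longrightarrow> j<k \<Longrightarrow> isCont (\<lambda>t. scl k a (-t) $$ (l,j)) 0"
  unfolding scl_def mat_diag_def by (simp, intro continuous_intros)

lemma sum_corr2: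
  fixes k :: nat
  assumes "a < k" "b < k" "a \<noteq> b"
  shows "(\<Sum>i<k. f i * (g i + (if i = a then x else 0) + (if i = b then y else 0))) = (\<Sum>i<k. f i * g i) + f a * x + f b * (y::real)"
proof -
  have "(\<Sum>i<k. f i * (g i + (if i = a then x else 0) + (if i = b then y else 0))) - (\<Sum>i<k. f i * g i)
     = (\<Sum>i<k. f i * (g i + (if i = a then x else 0) + (if i = b then y else 0)) - f i * g i)"
    by (simp add: sum_subtractf)
  also have "\<dots> = f a * x + f b * y"
    by (subst sum_two[where a=a and b=b]) (use assms in \<open>auto simp: algebra_simps\<close>)
  finally show ?thesis by simp
qed

lemma sum_corr1:
  fixes k :: nat
  assumes "a < k"
  shows "(\<Sum>i<k. f i * (if i = a then e else 1)) = (\<Sum>i<k. f i) + f a * (e - 1::real)"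
proof -
  have "(\<Sum>i<k. f i * (if i = a then e else 1)) - (\<Sum>i<k. f i) = (\<Sum>i<k. f i * (if i = a then e else 1) - f i)"
    by (simp add: sum_subtractf)
  also have "\<dots> = f a * (e - 1)"
    by (subst sum_one[where a=a]) (use assms in \<open>auto simp: algebra_simps\<close>)
  finally show ?thesis by simp
qed

theorem proposition3p8:
  fixes n k :: nat and M X :: "real mat" and nu d :: "nat \<Rightarrow> real" and idx :: "nat \<Rightarrow> nat"
  assumes "1 \<le> k" and "k \<le> n"
    and "sym_pos_def (2*n) M"
    and "0 < nu 0" and "\<And>j. Suc j < k \<Longrightarrow> nu j < nu (Suc j)"
    and "symp_eigenvalues n M d"
    and "\<forall>j<k. idx j < n" and "inj_on idx {..<k}"
    and "critical_point n k nu M X"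
    and "transpose_mat X * M * X = diag2 k (\<lambda>j. d (idx j))"
    and "a < b" and "b < k" and "d (idx a) < d (idx b)"
  shows "\<not> local_min n k nu M X \<and> saddle_point n k nu M X"
proof -
  define D where "D = (\<lambda>j. d (idx j))"
  have feas: "feasible n k X" using assms(9) unfolding critical_point_def by auto
  then have X: "X \<in> carrier_mat (2*n) (2*k)" unfolding feasible_def by auto
  have M: "M \<in> carrier_mat (2*n) (2*n)" using assms(3) unfolding sym_pos_def_def by auto
  have XMX: "transpose_mat X * M * X = diag2 k D" using assms(10) unfolding D_def .
  have ak: "a < k" and bk: "b < k" and ab: "a \<noteq> b" using assms(11,12) by auto
  have mono: "nu i < nu j" if "i < j" "j < k" for i j
    using that
  proof (induction j)
    case 0 then show ?case by simp
  next
    case (Suc j)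
    have s: "nu j < nu (Suc j)" using assms(5) Suc.prems by auto
    show ?case
    proof (cases "i = j")
      case True then show ?thesis using s by simp
    next
      case False then show ?thesis using Suc s by auto
    qed
  qed
  have nuab: "nu a < nu b" using mono assms(11,12) by auto
  have nua: "nu a > 0" proof (cases "a = 0")
    case True then show ?thesis using assms(4) by simp
  next
    case False then show ?thesis using mono[of 0 a] ak assms(4) by auto
  qed
  have Da: "D a > 0" using assms(6,7) ak unfolding symp_eigenvalues_def D_def by auto
  have Dab: "D a < D b" using assms(13) unfolding D_def .
  define S where "S = (\<Sum>i<k. nu i * D i)"
  have frot: "fobj k nu M (X * blk k (rot k a b t) (rot k a b t)) = 2 * (S + (sin t)\<^sup>2 * ((nu a - nu b) * (D b - D a)))" for t
  proof -
    have "(\<Sum>i<k. nu i * (\<Sum>l<k. D l * (rot k a b t $$ (l,i))\<^sup>2))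
        = (\<Sum>i<k. nu i * (D i + (if i = a then (sin t)\<^sup>2 * (D b - D a) else 0) + (if i = b then (sin t)\<^sup>2 * (D a - D b) else 0)))"
      by (rule sum.cong) (use ak bk ab in \<open>simp_all add: inner_rot\<close>)
    also have "\<dots> = S + nu a * ((sin t)\<^sup>2 * (D b - D a)) + nu b * ((sin t)\<^sup>2 * (D a - D b))"
      unfolding S_def by (rule sum_corr2[OF ak bk ab])
    finally show ?thesis using fobj_blk[OF X M XMX rot_carrier rot_carrier, of nu] by (simp add: algebra_simps)
  qed
  have fX: "fobj k nu M X = 2 * S"
  proof -
    have "X * blk k (rot k a b 0) (rot k a b 0) = X" unfolding rot0 blk_one using X by simp
    then show ?thesis using frot[of 0] by simp
  qed
  have fscl: "fobj k nu M (X * blk k (scl k a t) (scl k a (-t))) = 2 * S + nu a * D a * ((exp t)\<^sup>2 + (exp (-t))\<^sup>2 - 2)" for t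
  proof -
    have 1: "(\<Sum>i<k. nu i * (\<Sum>l<k. D l * (scl k a t $$ (l,i))\<^sup>2)) = S + nu a * D a * ((exp t)\<^sup>2 - 1)"
    proof -
      have "(\<Sum>i<k. nu i * (\<Sum>l<k. D l * (scl k a t $$ (l,i))\<^sup>2)) = (\<Sum>i<k. (nu i * D i) * (if i = a then (exp t)\<^sup>2 else 1))"
        by (rule sum.cong) (simp_all add: inner_scl)
      also have "\<dots> = S + nu a * D a * ((exp t)\<^sup>2 - 1)" unfolding S_def by (rule sum_corr1[OF ak])
      finally show ?thesis .
    qed
    have 2: "(\<Sum>i<k. nu i * (\<Sum>l<k. D l * (scl k a (-t) $$ (l,i))\<^sup>2)) = S + nu a * D a * ((exp (-t))\<^sup>2 - 1)"
    proof -
      have "(\<Sum>i<k. nu i * (\<Sum>l<k. D l * (scl k a (-t) $$ (l,i))\<^sup>2)) = (\<Sum>i<k. (nu i * D i) * (if i = a then (exp (-t))\<^sup>2 else 1))"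
        by (rule sum.cong) (simp_all add: inner_scl)
      also have "\<dots> = S + nu a * D a * ((exp (-t))\<^sup>2 - 1)" unfolding S_def by (rule sum_corr1[OF ak])
      finally show ?thesis .
    qed
    show ?thesis using fobj_blk[OF X M XMX scl_carrier scl_carrier, of nu] 1 2 by (simp add: algebra_simps)
  qed
  have notmin: "\<not> local_min n k nu M X"
  proof
    assume "local_min n k nu M X"
    then obtain e where e: "e > 0" and H: "\<And>Y. feasible n k Y \<Longrightarrow> mat_dist Y X < e \<Longrightarrow> fobj k nu M X \<le> fobj k nu M Y"
      unfolding local_min_def by blast
    obtain \<delta> where \<delta>: "\<delta> > 0" and HD: "\<And>t. t \<noteq> 0 \<and> \<bar>t\<bar> < \<delta> \<Longrightarrow> mat_dist (X * blk k (rot k a b t) (rot k a b t)) X < e"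
      using dist_small[OF X, of "\<lambda>t. blk k (rot k a b t) (rot k a b t)", OF blk_carrier[OF rot_carrier rot_carrier]
          _ blk_cont[OF rot_carrier rot_carrier rot_cont rot_cont] e]
      unfolding rot0 blk_one by blast
    define t where "t = min (\<delta>/2) 1"
    have t: "t > 0" "t < \<delta>" "t < pi" using \<delta> pi_ge_two unfolding t_def by auto
    have st: "sin t > 0" using sin_gt_zero t by auto
    let ?Y = "X * blk k (rot k a b t) (rot k a b t)"
    have fY: "feasible n k ?Y"
      by (rule feasible_mult[OF feas blk_carrier[OF rot_carrier rot_carrier] sympl_blk[OF rot_carrier rot_carrier]])
        (use rot_orth[OF ak bk ab] in auto)
    have "fobj k nu M X \<le> fobj k nu M ?Y" using H[OF fY HD] t by auto
    moreover have "(sin t)\<^sup>2 * ((nu a - nu b) * (D b - D a)) < 0"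
      using st nuab Dab by (intro mult_pos_neg mult_neg_pos) auto
    ultimately show False unfolding fX frot by (simp add: algebra_simps)
  qed
  have notmax: "\<not> local_max n k nu M X"
  proof
    assume "local_max n k nu M X"
    then obtain e where e: "e > 0" and H: "\<And>Y. feasible n k Y \<Longrightarrow> mat_dist Y X < e \<Longrightarrow> fobj k nu M Y \<le> fobj k nu M X"
      unfolding local_max_def by blast
    have C2: "isCont (\<lambda>t. blk k (scl k a t) (scl k a (-t)) $$ (l,j)) 0" if "l < 2*k" "j < 2*k" for l j
      by (rule blk_cont[OF scl_carrier scl_carrier scl_cont scl_cont2 that])
    obtain \<delta> where \<delta>: "\<delta> > 0" and HD: "\<And>t. t \<noteq> 0 \<and> \<bar>t\<bar> < \<delta> \<Longrightarrow> mat_dist (X * blk k (scl k a t) (scl k a (-t))) X < e"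
      using dist_small[OF X, of "\<lambda>t. blk k (scl k a t) (scl k a (-t))", OF blk_carrier[OF scl_carrier scl_carrier]
          _ C2 e]
      unfolding minus_zero scl0 blk_one by blast
    define t where "t = \<delta>/2"
    have t: "t > 0" "t < \<delta>" using \<delta> unfolding t_def by auto
    let ?Y = "X * blk k (scl k a t) (scl k a (-t))"
    have fY: "feasible n k ?Y"
      by (rule feasible_mult[OF feas blk_carrier[OF scl_carrier scl_carrier] sympl_blk[OF scl_carrier scl_carrier]])
        (use scl_inv scl_inv2 in auto)
    have "fobj k nu M ?Y \<le> fobj k nu M X" using H[OF fY HD] t by auto
    moreover have "(exp t)\<^sup>2 + (exp (-t))\<^sup>2 - 2 > 0"
    proof -
      have "(exp t)\<^sup>2 + (exp (-t))\<^sup>2 - 2 = (exp t - exp (-t))\<^sup>2"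
        using exp_minus_inverse[of t] by (simp add: power2_eq_square algebra_simps)
      moreover have "exp t \<noteq> exp (-t)" using t by simp
      ultimately show ?thesis by simp
    qed
    then have "nu a * D a * ((exp t)\<^sup>2 + (exp (-t))\<^sup>2 - 2) > 0" using nua Da by simp
    ultimately show False unfolding fX fscl by simp
  qed
  show ?thesis using notmin notmax assms(9) unfolding saddle_point_def by auto
qed

end
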